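(* Let $1\le n\le L$. If $q_i=0$ for all $i=1,\dots,n$, then $$Z_{L,n}=(p_1\cdots p_n)^{L-n}\,h_{L-n}\!\left(\frac{1}{p_1},\dots,\frac{1}{p_n}\right),$$ where $h_m(x_1,\dots,x_n)=\sum_{1\le i_1\le\cdots\le i_m\le n}x_{i_1}\cdots x_{i_m}$ is the complete homogeneous symmetric polynomial of degree $m$.
   Context: Particle labels are taken modulo $n$. $\Omega_{L,n}$ is the set of words $w_1\cdots w_L$ on the ring $\mathbb{Z}/L\mathbb{Z}$ over the alphabet $\{\bullet_1,\dots,\bullet_n,\Box_1,\dots,\Box_n\}$ in which each $\bullet_k$ occurs exactly once, the $\bullet_1,\dots,\bullet_n$ appear in this cyclic order, and the remaining $L-n$ letters are arbitrary $\Box_i$'s. For $w\in\Omega_{L,n}$ let $b_k$ be the position of $\bullet_k$ and $C_k$ the set of positions strictly between $b_k$ and $b_{k+1}$ going cyclically forward ($b_{n+1}=b_1$). For $i,k\in\{1,\dots,n\}$ set $w_\Box(i,k)=p_1\cdots p_{i-1}q_{i+1}\cdots q_kp_{k+1}\cdots p_n$ if $i\le k$ and $w_\Box(i,k)=q_1\cdots q_kp_{k+1}\cdots p_{i-1}q_{i+1}\cdots q_n$ if $k<i$ (empty products are $1$). The weight is $\mathrm{wt}(w)=\prod_{k=1}^n\prod_{j\in C_k}w_\Box(i_j,k)$ where $w_j=\Box_{i_j}$. The restricted partition function is the polynomial $Z_{L,n}=\sum\mathrm{wt}(w)$, summed over $w\in\Omega_{L,n}$ with $w_1=\bullet_1$;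 the claim concerns its specialization at $q_1=\cdots=q_n=0$. *)

theory Defs
  imports Main
begin

(* Letters: Bul k = \<bullet>_k (particle k),  Box i = \<box>_i.
   A word on the ring Z/LZ is a list of length L; paper position j (1..L)
   corresponds to list index j-1 (0..L-1). *)
datatype letter = Bul nat | Box nat

fun box_idx :: "letter \<Rightarrow> nat" where
  "box_idx (Box i) = i"
| "box_idx (Bul k) = 0"

definition bpos :: "letter list \<Rightarrow> nat \<Rightarrow> nat" where
  "bpos w k = (THE j. j < length w \<and> w ! j = Bul k)"

definition cyclic_order :: "nat \<Rightarrow> nat \<Rightarrow> letter list \<Rightarrow> bool" where
  "cyclic_order L n w \<longleftrightarrow>
     (\<exists>s::int. \<forall>k\<in>{1..<n}.
        (int (bpos w k) - s) mod int L < (int (bpos w (k+1)) - s) mod int L)"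

definition Omega :: "nat \<Rightarrow> nat \<Rightarrow> letter list set" where
  "Omega L n = {w. length w = L
      \<and> (\<forall>j<L. w ! j \<in> Bul ` {1..n} \<union> Box ` {1..n})
      \<and> (\<forall>k\<in>{1..n}. card {j. j < L \<and> w ! j = Bul k} = 1)
      \<and> cyclic_order L n w}"

definition nextlab :: "nat \<Rightarrow> nat \<Rightarrow> nat" where
  "nextlab n k = (if k = n then 1 else k + 1)"

(* C_k: positions strictly between b_k and b_{k+1}, going cyclically forward;
   if b_{k+1} = b_k (n = 1) this is all positions except b_k *)
definition Cset :: "nat \<Rightarrow> letter list \<Rightarrow> nat \<Rightarrow> nat set" where
  "Cset n w k = (let L = length w; b = int (bpos w k);
                     D = (int (bpos w (nextlab n k)) - b) mod int L;
                     D' = (if D = 0 then int L else D)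
                 in {j. j < L \<and> 0 < (int j - b) mod int L \<and> (int j - b) mod int L < D'})"

definition wbox :: "nat \<Rightarrow> (nat \<Rightarrow> 'a::comm_ring_1) \<Rightarrow> (nat \<Rightarrow> 'a) \<Rightarrow> nat \<Rightarrow> nat \<Rightarrow> 'a" where
  "wbox n p q i k = (if i \<le> k
      then (\<Prod>j\<in>{1..<i}. p j) * (\<Prod>j\<in>{i+1..k}. q j) * (\<Prod>j\<in>{k+1..n}. p j)
      else (\<Prod>j\<in>{1..k}. q j) * (\<Prod>j\<in>{k+1..<i}. p j) * (\<Prod>j\<in>{i+1..n}. q j))"

definition wt :: "nat \<Rightarrow> (nat \<Rightarrow> 'a::comm_ring_1) \<Rightarrow> (nat \<Rightarrow> 'a) \<Rightarrow> letter list \<Rightarrow> 'a" where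
  "wt n p q w = (\<Prod>k\<in>{1..n}. \<Prod>j\<in>Cset n w k. wbox n p q (box_idx (w ! j)) k)"

definition Zpart :: "nat \<Rightarrow> nat \<Rightarrow> (nat \<Rightarrow> 'a::comm_ring_1) \<Rightarrow> (nat \<Rightarrow> 'a) \<Rightarrow> 'a" where
  "Zpart L n p q = (\<Sum>w\<in>{w \<in> Omega L n. w ! 0 = Bul 1}. wt n p q w)"

definition hcomp :: "nat \<Rightarrow> nat \<Rightarrow> (nat \<Rightarrow> 'a::comm_ring_1) \<Rightarrow> 'a" where
  "hcomp m n x = (\<Sum>is\<in>{is. length is = m \<and> sorted is \<and> set is \<subseteq> {1..n}}. prod_list (map x is))"

end

theory Submission
  imports Defs "HOL-Library.Multiset"
begin

definition blk :: "(nat \<Rightarrow> nat) \<Rightarrow> nat \<Rightarrow> letter list" where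
  "blk c k = Bul k # replicate (c k) (Box k)"
definition Wn :: "nat \<Rightarrow> (nat \<Rightarrow> nat) \<Rightarrow> letter list" where
  "Wn n c = concat (map (blk c) [1..<Suc n])"
definition posc :: "(nat \<Rightarrow> nat) \<Rightarrow> nat \<Rightarrow> nat" where
  "posc c k = (\<Sum>i\<in>{1..<k}. Suc (c i))"
definition Rl :: "nat \<Rightarrow> (nat \<Rightarrow> nat) \<Rightarrow> nat list" where
  "Rl n c = concat (map (\<lambda>k. replicate (c k) k) [1..<Suc n])"
definition isBox :: "letter \<Rightarrow> bool" where
  "isBox x = (case x of Box _ \<Rightarrow> True | Bul _ \<Rightarrow> False)"
definition phi :: "letter list \<Rightarrow> nat list" where
  "phi w = map box_idx (filter isBox w)"

lemma Wn_Suc: "Wn (Suc n) c = Wn n c @ blk c (Suc n)"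
  by (simp add: Wn_def)
lemma Rl_Suc: "Rl (Suc n) c = Rl n c @ replicate (c (Suc n)) (Suc n)"
  by (simp add: Rl_def)
lemma posc_Suc: "1 \<le> k \<Longrightarrow> posc c (Suc k) = posc c k + Suc (c k)"
  unfolding posc_def by (simp add: atLeastLessThanSuc add.commute)
lemma posc_1[simp]: "posc c 1 = 0" "posc c 0 = 0" "posc c (Suc 0) = 0"
  unfolding posc_def by auto
lemma posc_mono: "k \<le> k' \<Longrightarrow> posc c k \<le> posc c k'"
  unfolding posc_def by (rule sum_mono2) auto
lemma posc_lt: "1 \<le> k \<Longrightarrow> k < k' \<Longrightarrow> posc c k + Suc (c k) \<le> posc c k'"
  using posc_mono[of "Suc k" k' c] posc_Suc[of k c] by simp

lemma length_Wn: "length (Wn n c) = posc c (Suc n)"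
  by (induction n) (auto simp: Wn_Suc posc_Suc blk_def Wn_def)

lemma nth_Wn: "k \<in> {1..n} \<Longrightarrow> i \<le> c k \<Longrightarrow>
   Wn n c ! (posc c k + i) = (if i = 0 then Bul k else Box k)"
proof (induction n)
  case 0 then show ?case by simp
next
  case (Suc n)
  show ?case
  proof (cases "k = Suc n")
    case True
    then show ?thesis using Suc.prems
      by (auto simp: Wn_Suc nth_append length_Wn blk_def)
  next
    case False
    then have k: "k \<in> {1..n}" using Suc.prems by auto
    have "posc c k + i < posc c (Suc n)"
      using posc_lt[of k "Suc n" c] k Suc.prems by auto
    then show ?thesis using Suc.IH[OF k Suc.prems(2)]
      by (auto simp: Wn_Suc nth_append length_Wn)
  qed
qed

lemma cover_Wn: "j < length (Wn n c) \<Longrightarrow> \<exists>k\<in>{1..n}. \<exists>i\<le>c k. j = posc c k + i"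
proof (induction n)
  case 0 then show ?case by (simp add: length_Wn)
next
  case (Suc n)
  show ?case
  proof (cases "j < posc c (Suc n)")
    case True
    then show ?thesis using Suc.IH by (force simp: length_Wn)
  next
    case False
    then show ?thesis using Suc.prems posc_Suc[of "Suc n" c]
      by (auto simp: length_Wn intro!: bexI[of _ "Suc n"] exI[of _ "j - posc c (Suc n)"])
  qed
qed

lemma Wn_cong: "(\<And>k. k \<in> {1..n} \<Longrightarrow> c k = d k) \<Longrightarrow> Wn n c = Wn n d"
  unfolding Wn_def blk_def by (intro arg_cong[where f=concat] map_cong) auto

lemma phi_Wn: "phi (Wn n c) = Rl n c"
  by (induction n) (auto simp: Wn_Suc Rl_Suc phi_def blk_def isBox_def Wn_def Rl_def)

lemma Rl_props: "sorted (Rl n c) \<and> set (Rl n c) \<subseteq> {1..n}"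
  by (induction n) (auto simp: Rl_Suc sorted_append Rl_def)

lemma count_Rl: "count_list (Rl n c) k = (if k \<in> {1..n} then c k else 0)"
proof (induction n)
  case (Suc n)
  then show ?case by (cases "k = Suc n") (auto simp: Rl_Suc count_list_eq_length_filter)
qed (simp add: Rl_def)

lemma prod_Rl: "prod_list (map g (Rl n c)) = (\<Prod>k\<in>{1..n}. g k ^ c k)"
  by (induction n) (auto simp: Rl_Suc Rl_def)

lemma Rl_count: "sorted xs \<Longrightarrow> set xs \<subseteq> {1..n} \<Longrightarrow> Rl n (count_list xs) = xs"
proof -
  assume a: "sorted xs" "set xs \<subseteq> {1..n}"
  have "mset (Rl n (count_list xs)) = mset xs"
  proof (rule multiset_eqI)
    fix k show "count (mset (Rl n (count_list xs))) k = count (mset xs) k"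
      using a by (auto simp: count_mset count_Rl count_list_0_iff)
  qed
  then have "sort xs = Rl n (count_list xs)" using Rl_props by (intro properties_for_sort) auto
  then show ?thesis using a sorted_sort_id by metis
qed

lemma bpos_eq: "j < length w \<Longrightarrow> w!j = Bul k \<Longrightarrow> (\<And>j'. j' < length w \<Longrightarrow> w!j' = Bul k \<Longrightarrow> j' = j) \<Longrightarrow> bpos w k = j"
  unfolding bpos_def by (rule the_equality) blast+

lemma Omega_bul:
  assumes "w \<in> Omega L n" "k \<in> {1..n}"
  shows "bpos w k < L \<and> w!(bpos w k) = Bul k \<and> (\<forall>j<L. w!j = Bul k \<longrightarrow> j = bpos w k)"
proof -
  have len: "length w = L" using assms(1) unfolding Omega_def by simp
  have "card {j. j < L \<and> w ! j = Bul k} = 1" using assms unfolding Omega_def by simp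
  then obtain x where x: "{j. j < L \<and> w ! j = Bul k} = {x}" by (rule card_1_singletonE)
  have 1: "x < L" "w!x = Bul k" using x by blast+
  have 2: "\<forall>j<L. w!j = Bul k \<longrightarrow> j = x" using x by blast
  have "bpos w k = x" using len 1 2 by (intro bpos_eq) blast+
  then show ?thesis using 1 2 by blast
qed

lemma Omega_incr:
  assumes w: "w \<in> Omega L n" and w0: "w!0 = Bul 1" and n: "1 \<le> n"
  shows "bpos w 1 = 0" and "\<And>k k'. 1 \<le> k \<Longrightarrow> k < k' \<Longrightarrow> k' \<le> n \<Longrightarrow> bpos w k < bpos w k'"
proof -
  have len: "length w = L" using w by (simp add: Omega_def)
  have L: "0 < L" using Omega_bul[OF w, of 1, THEN conjunct1] n by auto
  have ob1: "\<forall>j<L. w!j = Bul 1 \<longrightarrow> j = bpos w 1" using Omega_bul[OF w, of 1] n by simp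
  show b1: "bpos w 1 = 0" using L w0 ob1 by metis
  obtain s where s: "\<forall>k\<in>{1..<n}. (int (bpos w k) - s) mod int L < (int (bpos w (k+1)) - s) mod int L"
    using w by (auto simp: Omega_def cyclic_order_def)
  define r where "r k = (int (bpos w k) - s) mod int L" for k
  have rstep: "r k < r (Suc k)" if "1 \<le> k" "k < n" for k using s that by (auto simp: r_def)
  have rmono: "r k < r (k + Suc d)" if "1 \<le> k" "k + Suc d \<le> n" for k d
    using that
  proof (induction d)
    case 0 then show ?case using rstep by simp
  next
    case (Suc d)
    then have "r k < r (k + Suc d)" by simp
    also have "\<dots> < r (Suc (k + Suc d))" using Suc.prems by (intro rstep) auto
    finally show ?case by simp
  qed
  have rrange: "0 \<le> r k \<and> r k < int L" for k using L by (simp add: r_def)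
  have beq: "int (bpos w k) = r k - r 1" if "k \<in> {1..n}" for k
  proof -
    have le: "r 1 \<le> r k"
    proof (cases "k = 1")
      case False
      then have "r 1 < r (1 + Suc (k - 2))" using that by (intro rmono) auto
      moreover have "1 + Suc (k - 2) = k" using that False by auto
      ultimately show ?thesis by simp
    qed simp
    have "(r k - r 1) mod int L = ((int (bpos w k) - s) - (int (bpos w 1) - s)) mod int L"
      unfolding r_def by (rule mod_diff_eq)
    also have "\<dots> = int (bpos w k) mod int L" using b1 by simp
    also have "\<dots> = int (bpos w k)" using Omega_bul[OF w that, THEN conjunct1] by simp
    finally show ?thesis using le rrange[of k] rrange[of 1] by simp
  qed
  show "bpos w k < bpos w k'" if "1 \<le> k" "k < k'" "k' \<le> n" for k k'
  proof -
    have "r k < r (k + Suc (k' - k - 1))" using that by (intro rmono) auto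
    moreover have "k + Suc (k' - k - 1) = k'" using that by auto
    ultimately have "r k < r k'" by simp
    then show ?thesis using beq[of k] beq[of k'] that by auto
  qed
qed

lemma mod_shift:
  assumes "j < L" "b < (L::nat)"
  shows "(int j - int b) mod int L = (if b \<le> j then int j - int b else int j - int b + int L)"
proof (cases "b \<le> j")
  case True then show ?thesis using assms by (intro mod_pos_pos_trivial[THEN trans]) auto
next
  case False
  have "(int j - int b) mod int L = (int j - int b + int L) mod int L" by simp
  also have "\<dots> = int j - int b + int L" using False assms by (intro mod_pos_pos_trivial) auto
  finally show ?thesis using False by simp
qed

lemma Cset_char:
  assumes w: "w \<in> Omega L n" and w0: "w!0 = Bul 1" and n: "1 \<le> n" and k: "k \<in> {1..n}"
  shows "Cset n w k = {j. bpos w k < j \<and> j < (if k < n then bpos w (Suc k) else L)}"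
proof -
  have len: "length w = L" using w by (simp add: Omega_def)
  have bk: "bpos w k < L" using Omega_bul[OF w k, THEN conjunct1] .
  show ?thesis
  proof (cases "k < n")
    case True
    have bk1: "bpos w (Suc k) < L" using Omega_bul[OF w, of "Suc k", THEN conjunct1] True by simp
    have lt: "bpos w k < bpos w (Suc k)" using Omega_incr(2)[OF w w0 n, of k "Suc k"] True k by simp
    have nl: "nextlab n k = Suc k" using True by (simp add: nextlab_def)
    have D: "(int (bpos w (Suc k)) - int (bpos w k)) mod int L = int (bpos w (Suc k)) - int (bpos w k)"
      using mod_shift[OF bk1 bk] lt by simp
    have "(j < L \<and> 0 < (int j - int (bpos w k)) mod int L \<and> (int j - int (bpos w k)) mod int L < int (bpos w (Suc k)) - int (bpos w k))
       \<longleftrightarrow> (bpos w k < j \<and> j < bpos w (Suc k))" for j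
    proof (cases "j < L")
      case True
      then show ?thesis using mod_shift[OF True bk] bk1 lt by (cases "bpos w k \<le> j") auto
    next
      case False then show ?thesis using bk1 by auto
    qed
    then show ?thesis unfolding Cset_def Let_def len nl D using True lt by auto
  next
    case False
    then have kn: "k = n" using k by auto
    have nl: "nextlab n k = 1" using kn by (simp add: nextlab_def)
    have b1: "bpos w 1 = 0" using Omega_incr(1)[OF w w0 n] .
    have L0: "0 < L" using bk by simp
    have D: "(if (int (bpos w 1) - int (bpos w k)) mod int L = 0 then int L
              else (int (bpos w 1) - int (bpos w k)) mod int L) = int L - int (bpos w k)"
      using mod_shift[OF L0 bk] b1 bk by auto
    have "(j < L \<and> 0 < (int j - int (bpos w k)) mod int L \<and> (int j - int (bpos w k)) mod int L < int L - int (bpos w k))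
       \<longleftrightarrow> (bpos w k < j \<and> j < L)" for j
    proof (cases "j < L")
      case True
      then show ?thesis using mod_shift[OF True bk] bk by (cases "bpos w k \<le> j") auto
    next
      case False then show ?thesis by auto
    qed
    then show ?thesis unfolding Cset_def Let_def len nl D using False by auto
  qed
qed

lemma posc_lt_len: "k \<in> {1..n} \<Longrightarrow> posc c k + c k < length (Wn n c)"
  using posc_lt[of k "Suc n" c] by (cases "k = n") (auto simp: length_Wn posc_Suc)

lemma Wn_bul_iff:
  assumes j: "j < length (Wn n c)" and k: "k \<in> {1..n}"
  shows "Wn n c ! j = Bul k \<longleftrightarrow> j = posc c k"
proof -
  obtain k' i where k': "k' \<in> {1..n}" "i \<le> c k'" "j = posc c k' + i" using cover_Wn[OF j] by blast
  show ?thesis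
  proof
    assume "Wn n c ! j = Bul k"
    then show "j = posc c k" using nth_Wn[of k' n i c, OF k'(1,2)] k' by (cases "i = 0") auto
  next
    assume "j = posc c k"
    then show "Wn n c ! j = Bul k" using nth_Wn[OF k, of 0] by simp
  qed
qed

lemma bpos_Wn: "k \<in> {1..n} \<Longrightarrow> bpos (Wn n c) k = posc c k"
  using posc_lt_len[of k n c] Wn_bul_iff[of _ n c k] by (intro bpos_eq) auto

lemma W_Omega:
  assumes n: "1 \<le> n" and len: "length (Wn n c) = L"
  shows "Wn n c \<in> Omega L n" "Wn n c ! 0 = Bul 1"
proof -
  show "Wn n c ! 0 = Bul 1" using nth_Wn[of 1 n 0 c] n by simp
  have alph: "Wn n c ! j \<in> Bul ` {1..n} \<union> Box ` {1..n}" if jL: "j < L" for j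
  proof -
    obtain k' i where k': "k' \<in> {1..n}" "i \<le> c k'" "j = posc c k' + i" using cover_Wn[of j n c] jL len by blast
    then show ?thesis using nth_Wn[of k' n i c, OF k'(1,2)] by auto
  qed
  have card: "card {j. j < L \<and> Wn n c ! j = Bul k} = 1" if "k \<in> {1..n}" for k
  proof -
    have "{j. j < L \<and> Wn n c ! j = Bul k} = {posc c k}"
      using Wn_bul_iff[of _ n c k] that posc_lt_len[OF that, of c] len by auto
    then show ?thesis by simp
  qed
  have cyc: "cyclic_order L n (Wn n c)"
    unfolding cyclic_order_def
  proof (intro exI[of _ 0] ballI)
    fix k assume k: "k \<in> {1..<n}"
    have k1: "k \<in> {1..n}" "k + 1 \<in> {1..n}" using k by auto
    have a: "posc c k < posc c (k+1)" using posc_lt[of k "k+1" c] k by auto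
    have b: "posc c (k+1) < L" using posc_lt_len[OF k1(2), of c] len by auto
    show "(int (bpos (Wn n c) k) - 0) mod int L < (int (bpos (Wn n c) (k + 1)) - 0) mod int L"
      using a b unfolding bpos_Wn[OF k1(1)] bpos_Wn[OF k1(2)] by simp
  qed
  show "Wn n c \<in> Omega L n" unfolding Omega_def using len alph card cyc by blast
qed

lemma Cset_Wn:
  assumes n: "1 \<le> n" and k: "k \<in> {1..n}"
  shows "Cset n (Wn n c) k = {posc c k<..<posc c (Suc k)}"
proof -
  have e: "(if k < n then bpos (Wn n c) (Suc k) else length (Wn n c)) = posc c (Suc k)"
    using k bpos_Wn[of "Suc k" n c] by (auto simp: length_Wn)
  show ?thesis
    using Cset_char[OF W_Omega(1)[of n c "length (Wn n c)", OF n refl] W_Omega(2)[of n c "length (Wn n c)", OF n refl] n k] 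
    unfolding e bpos_Wn[OF k] by (simp add: greaterThanLessThan_def greaterThan_def lessThan_def Collect_conj_eq)
qed

definition goodw :: "nat \<Rightarrow> letter list \<Rightarrow> bool" where
  "goodw n w = (\<forall>k\<in>{1..n}. \<forall>j\<in>Cset n w k. w!j = Box k)"

lemma W_good: assumes n: "1 \<le> n" shows "goodw n (Wn n c)"
  unfolding goodw_def
proof (intro ballI)
  fix k j assume k: "k \<in> {1..n}" and j: "j \<in> Cset n (Wn n c) k"
  then have j': "posc c k < j" "j < posc c k + Suc (c k)"
    using Cset_Wn[OF n k] posc_Suc[of k c] by auto
  then have "Wn n c ! (posc c k + (j - posc c k)) = Box k"
    using nth_Wn[of k n "j - posc c k" c, OF k] by auto
  then show "Wn n c ! j = Box k" using j' by simp
qed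

lemma struct_good:
  assumes w: "w \<in> Omega L n" and w0: "w!0 = Bul 1" and n: "1 \<le> n" and g: "goodw n w"
  shows "w = Wn n (\<lambda>k. (if k < n then bpos w (Suc k) else L) - bpos w k - 1)"
proof -
  define b where "b = bpos w"
  define e where "e k = (if k < n then b (Suc k) else L)" for k
  define c where "c k = e k - b k - 1" for k
  have len: "length w = L" using w by (simp add: Omega_def)
  have bL: "b k < L" if "k \<in> {1..n}" for k using Omega_bul[OF w that, THEN conjunct1] by (simp add: b_def)
  have binc: "b k < b k'" if "1 \<le> k" "k < k'" "k' \<le> n" for k k'
    using Omega_incr(2)[OF w w0 n that] by (simp add: b_def)
  have b1: "b 1 = 0" using Omega_incr(1)[OF w w0 n] by (simp add: b_def)
  have be: "b k < e k" if "k \<in> {1..n}" for k using bL[OF that] binc[of k "Suc k"] that by (auto simp: e_def)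
  have pos: "posc c k = b k" if "k \<in> {1..n}" for k
    using that
  proof (induction k)
    case 0 then show ?case by simp
  next
    case (Suc k)
    show ?case
    proof (cases "k = 0")
      case True then show ?thesis using b1 by simp
    next
      case False
      then have k: "k \<in> {1..n}" "k < n" using Suc.prems by auto
      have "posc c (Suc k) = posc c k + Suc (c k)" using posc_Suc[of k c] k by simp
      also have "\<dots> = b k + Suc (c k)" using Suc.IH k by simp
      also have "\<dots> = b (Suc k)" using be[OF k(1)] k by (simp add: c_def e_def)
      finally show ?thesis .
    qed
  qed
  have lenW: "length (Wn n c) = L"
  proof -
    have "length (Wn n c) = posc c n + Suc (c n)" using posc_Suc[of n c] n by (simp add: length_Wn)
    also have "\<dots> = L" using pos[of n] be[of n] n by (simp add: c_def e_def)
    finally show ?thesis .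
  qed
  have "w = Wn n c"
  proof (rule nth_equalityI)
    show "length w = length (Wn n c)" using len lenW by simp
    fix j assume "j < length w"
    then have j: "j < L" using len by simp
    define K where "K = {k \<in> {1..n}. b k \<le> j}"
    have fK: "finite K" "K \<noteq> {}" using b1 n by (auto simp: K_def intro!: exI[of _ 1])
    define k where "k = Max K"
    have kK: "k \<in> K" using fK Max_in k_def by blast
    then have k: "k \<in> {1..n}" "b k \<le> j" by (auto simp: K_def)
    have jk: "j < e k"
    proof (cases "k < n")
      case True
      have "Suc k \<notin> K" using Max_ge[OF fK(1), of "Suc k"] k_def by auto
      then show ?thesis using True k by (auto simp: K_def e_def)
    next
      case False then show ?thesis using j by (simp add: e_def)
    qed
    have jw: "j = posc c k + (j - b k)" "j - b k \<le> c k" using pos[OF k(1)] k jk by (auto simp: c_def)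
    show "w ! j = Wn n c ! j"
    proof (cases "j = b k")
      case True
      have "w!(b k) = Bul k" using Omega_bul[OF w k(1)] unfolding b_def by blast
      moreover have "Wn n c ! (posc c k + 0) = Bul k" using nth_Wn[OF k(1), of 0 c] by simp
      ultimately show ?thesis using True pos[OF k(1)] by simp
    next
      case False
      have "bpos w k < j \<and> j < (if k < n then bpos w (Suc k) else L)"
        using False k(2) jk unfolding b_def e_def by simp
      then have "j \<in> Cset n w k" unfolding Cset_char[OF w w0 n k(1)] by blast
      then have "w ! j = Box k" using g k(1) unfolding goodw_def by blast
      moreover have "Wn n c ! j = Box k"
      proof -
        have "j - b k \<noteq> 0" using False k(2) by simp
        then have "Wn n c ! (posc c k + (j - b k)) = Box k" using nth_Wn[of k n "j - b k" c, OF k(1) jw(2)] by simp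
        then show ?thesis unfolding jw(1)[symmetric] .
      qed
      ultimately show ?thesis by simp
    qed
  qed
  moreover have cf: "c = (\<lambda>k. (if k < n then bpos w (Suc k) else L) - bpos w k - 1)"
    by (simp add: fun_eq_iff c_def e_def b_def)
  ultimately show ?thesis by metis
qed

lemma length_Wn2: "length (Wn n c) = n + (\<Sum>k\<in>{1..n}. c k)"
  by (induction n) (auto simp: Wn_Suc blk_def Wn_def)

lemma length_Rl: "length (Rl n c) = (\<Sum>k\<in>{1..n}. c k)"
  by (induction n) (auto simp: Rl_Suc Rl_def)

lemma wbox_zero:
  assumes k: "k \<in> {1..n}" and ik: "i \<noteq> k" and q: "\<forall>i\<in>{1..n}. q i = 0"
  shows "wbox n p q i k = 0"
proof (cases "i \<le> k")
  case True
  then have "(\<Prod>j\<in>{i+1..k}. q j) = 0" using ik k q by (intro prod_zero) (auto intro!: bexI[of _ k])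
  then show ?thesis using True by (simp add: wbox_def)
next
  case False
  then have "(\<Prod>j\<in>{1..k}. q j) = 0" using k q by (intro prod_zero) (auto intro!: bexI[of _ k])
  then show ?thesis using False by (simp add: wbox_def)
qed

lemma wbox_diag:
  assumes k: "k \<in> {1..n}"
  shows "(\<Prod>i\<in>{1..n}. p i) = wbox n p q k k * p k"
proof -
  have e: "{1..n} = {1..<k} \<union> insert k {k+1..n}" using k by auto
  have "(\<Prod>i\<in>{1..n}. p i) = (\<Prod>i\<in>{1..<k}. p i) * (p k * (\<Prod>i\<in>{k+1..n}. p i))"
    unfolding e by (subst prod.union_disjoint) auto
  then show ?thesis by (simp add: wbox_def)
qed

lemma wt_zero:
  assumes g: "\<not> goodw n w" and q: "\<forall>i\<in>{1..n}. q i = 0"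
  shows "wt n p q w = 0"
proof -
  obtain k j where k: "k \<in> {1..n}" and j: "j \<in> Cset n w k" and ne: "w ! j \<noteq> Box k"
    using g unfolding goodw_def by blast
  have "box_idx (w ! j) \<noteq> k" using ne k by (cases "w ! j") auto
  then have z: "wbox n p q (box_idx (w ! j)) k = 0" using wbox_zero[OF k _ q] by blast
  have fin: "finite (Cset n w k)" unfolding Cset_def Let_def by auto
  have "(\<Prod>j\<in>Cset n w k. wbox n p q (box_idx (w ! j)) k) = 0"
    using fin j z by (meson prod_zero)
  then show ?thesis unfolding wt_def using k by (intro prod_zero) auto
qed

lemma wt_W:
  assumes n: "1 \<le> n"
  shows "wt n p q (Wn n c) = (\<Prod>k\<in>{1..n}. wbox n p q k k ^ c k)"
  unfolding wt_def
proof (rule prod.cong[OF refl])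
  fix k assume k: "k \<in> {1..n}"
  have "(\<Prod>j\<in>Cset n (Wn n c) k. wbox n p q (box_idx (Wn n c ! j)) k)
      = (\<Prod>j\<in>Cset n (Wn n c) k. wbox n p q k k)"
  proof (rule prod.cong[OF refl])
    fix j assume "j \<in> Cset n (Wn n c) k"
    then have "Wn n c ! j = Box k" using W_good[OF n, of c] k unfolding goodw_def by blast
    then show "wbox n p q (box_idx (Wn n c ! j)) k = wbox n p q k k" by simp
  qed
  also have "\<dots> = wbox n p q k k ^ c k"
    unfolding Cset_Wn[OF n k] using posc_Suc[of k c] k by simp
  finally show "(\<Prod>j\<in>Cset n (Wn n c) k. wbox n p q (box_idx (Wn n c ! j)) k) = wbox n p q k k ^ c k" .
qed

theorem proposition5p8:
  fixes L n :: nat and p q :: "nat \<Rightarrow> 'a::field"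
  assumes "1 \<le> n" and "n \<le> L"
    and "\<forall>i\<in>{1..n}. q i = 0"
    and "\<forall>i\<in>{1..n}. p i \<noteq> 0"
  shows "Zpart L n p q = (\<Prod>i\<in>{1..n}. p i) ^ (L - n) * hcomp (L - n) n (\<lambda>i. 1 / p i)"
proof -
  note n = assms(1) and nL = assms(2) and q = assms(3) and p0 = assms(4)
  define P where "P = (\<Prod>i\<in>{1..n}. p i)"
  define A where "A = {w \<in> Omega L n. w ! 0 = Bul 1}"
  define S where "S = {w \<in> A. goodw n w}"
  define Srt where "Srt = {xs. length xs = L - n \<and> sorted xs \<and> set xs \<subseteq> {1..n}}"
  define f where "f xs = Wn n (count_list xs)" for "xs"
  have finA: "finite A"
  proof (rule finite_subset)
    show "A \<subseteq> {xs. set xs \<subseteq> Bul ` {1..n} \<union> Box ` {1..n} \<and> length xs = L}"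
      unfolding A_def Omega_def by (auto simp: in_set_conv_nth)
    show "finite {xs. set xs \<subseteq> Bul ` {1..n} \<union> Box ` {1..n} \<and> length xs = L}"
      by (intro finite_lists_length_eq) auto
  qed
  have step1: "Zpart L n p q = sum (wt n p q) S"
    unfolding Zpart_def A_def[symmetric]
    by (rule sum.mono_neutral_right[OF finA]) (auto simp: S_def intro: wt_zero[OF _ q])
  have struct: "\<exists>c. w = Wn n c" if "w \<in> S" for w
    using struct_good[of w L n] that n unfolding S_def A_def by blast
  have bij: "bij_betw f Srt S"
  proof (rule bij_betw_byWitness[where f'=phi])
    show "\<forall>a\<in>Srt. phi (f a) = a"
      unfolding Srt_def f_def phi_Wn using Rl_count by blast
    show "\<forall>a'\<in>S. f (phi a') = a'"
    proof
      fix w assume "w \<in> S"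
      then obtain c where c: "w = Wn n c" using struct by blast
      have "f (phi w) = Wn n (count_list (Rl n c))" unfolding f_def c phi_Wn ..
      also have "\<dots> = Wn n c" by (rule Wn_cong) (simp add: count_Rl)
      finally show "f (phi w) = w" using c by simp
    qed
    show "f ` Srt \<subseteq> S"
    proof
      fix w assume "w \<in> f ` Srt"
      then obtain "xs" where xs: "xs \<in> Srt" "w = f xs" by blast
      have "length w = L"
        using xs sum_count_set[of "xs" "{1..n}"] nL unfolding Srt_def f_def by (auto simp: length_Wn2)
      then show "w \<in> S" unfolding S_def A_def using W_Omega[OF n] W_good[OF n] xs(2) unfolding f_def by blast
    qed
    show "phi ` S \<subseteq> Srt"
    proof
      fix x assume "x \<in> phi ` S"
      then obtain w where w: "w \<in> S" "x = phi w" by blast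
      then obtain c where c: "w = Wn n c" using struct by blast
      have "length w = L" using w(1) unfolding S_def A_def Omega_def by simp
      then have "length (Rl n c) = L - n" unfolding c length_Wn2 length_Rl by simp
      then show "x \<in> Srt" unfolding Srt_def w(2) c phi_Wn using Rl_props by blast
    qed
  qed
  have termeq: "wt n p q (f xs) = P ^ (L - n) * prod_list (map (\<lambda>i. 1 / p i) xs)" if "xs \<in> Srt" for "xs"
  proof -
    define c where "c = count_list xs"
    have Rc: "Rl n c = xs" using that Rl_count unfolding Srt_def c_def by blast
    have sc: "(\<Sum>k\<in>{1..n}. c k) = L - n" using length_Rl[of n c] Rc that unfolding Srt_def by simp
    have wb: "wbox n p q k k = P * (1 / p k)" if k: "k \<in> {1..n}" for k
      using wbox_diag[OF k, of p q] p0 k unfolding P_def by (simp add: field_simps)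
    have "wt n p q (f xs) = (\<Prod>k\<in>{1..n}. (P * (1 / p k)) ^ c k)"
      unfolding f_def c_def[symmetric] wt_W[OF n] using wb by (intro prod.cong) auto
    also have "\<dots> = (\<Prod>k\<in>{1..n}. P ^ c k) * (\<Prod>k\<in>{1..n}. (1 / p k) ^ c k)"
      by (simp only: power_mult_distrib prod.distrib)
    also have "\<dots> = P ^ (L - n) * prod_list (map (\<lambda>i. 1 / p i) xs)"
    proof -
      have "(\<Prod>k\<in>{1..n}. (1 / p k) ^ c k) = prod_list (map (\<lambda>i. 1 / p i) xs)"
        using prod_Rl[of "\<lambda>i. 1 / p i" n c] Rc by simp
      moreover have "(\<Prod>k\<in>{1..n}. P ^ c k) = P ^ (L - n)" using sc power_sum[of P c "{1..n}"] by simp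
      ultimately show ?thesis by simp
    qed
    finally show ?thesis .
  qed
  have "Zpart L n p q = sum (\<lambda>xs. wt n p q (f xs)) Srt"
    unfolding step1 by (rule sum.reindex_bij_betw[OF bij, symmetric])
  also have "\<dots> = sum (\<lambda>xs. P ^ (L - n) * prod_list (map (\<lambda>i. 1 / p i) xs)) Srt"
    using termeq by (rule sum.cong[OF refl])
  also have "\<dots> = P ^ (L - n) * hcomp (L - n) n (\<lambda>i. 1 / p i)"
    unfolding hcomp_def Srt_def sum_distrib_left ..
  finally show ?thesis unfolding P_def .
qed

end
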